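(* Assume $\alpha=\beta\ge1$ and choose $p>0$ with $\alpha-1\le p\le\max\{\alpha/2,\alpha-1\}$. Let $\mathbf U$ with multiplier $\Lambda$ be the similarity profile and let $\mathbf u$ be a solution of the scaled system with $E_p(\tau):=\mathcal E_p(\mathbf u(\tau)|\mathbf U)$ and $E_p(0)<\infty$. Then for all $\tau>0$, $$\frac{\mathrm d}{\mathrm d\tau}E_p(\tau)\le-\Big(\frac12-\tilde\mu_{p,\alpha}e^{-\tau}\Big)E_p(\tau)+\tilde K_{p,\alpha}e^{-\tau},$$ where: if $2\le\alpha=p+1$, then $\tilde\mu_{\alpha-1,\alpha}=0$ and $\tilde K_{\alpha-1,\alpha}=\frac1{4k}\int_{\mathbb R}\frac{\Lambda^2}{U^\alpha}\mathrm dy$; if $1\le\alpha<2$, then with $\kappa=\sqrt{1+p-\alpha}$, $\tilde\mu_{p,\alpha}=\frac{\kappa}{k}\widehat M_{p,\alpha}\big\|\frac{\Lambda^2}{U^{\alpha+1}}\big\|_{L^\infty}$ and $\tilde K_{p,\alpha}=\frac1k\widehat M_{p,\alpha}\big(\kappa F_p^*(\kappa)+1\big)\int_{\mathbb R}\frac{\Lambda^2}{U^\alpha}\mathrm dy$.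
   Context: Fix $d_1,d_2,k>0$, real stoichiometric coefficients $\alpha,\beta\ge1$ and $A_-,A_+>0$. The similarity profile is a triple $(U,V,\Lambda)$ with $U,V\in\mathrm C^2(\mathbb R)$ positive, bounded and bounded away from $0$, $\Lambda:\mathbb R\to\mathbb R$, satisfying $d_1U''+\tfrac y2U'+\alpha\Lambda=0$, $d_2V''+\tfrac y2V'-\beta\Lambda=0$, $U^\alpha=V^\beta$ on $\mathbb R$, and $U(\pm\infty)=A_\pm^\beta$, $V(\pm\infty)=A_\pm^\alpha$. The scaled system is $u_\tau=d_1u_{yy}+\tfrac y2u_y+e^\tau\alpha k(v^\beta-u^\alpha)$, $v_\tau=d_2v_{yy}+\tfrac y2v_y-e^\tau\beta k(v^\beta-u^\alpha)$ for $\tau>0$, $y\in\mathbb R$, with $(u,v)(\tau,\pm\infty)=(A_\pm^\beta,A_\pm^\alpha)$. A "solution" is a positive classical solution for which the relative entropy is finite and differentiable in $\tau$ with differentiation under the integral allowed, all integrals appearing are finite, and integrations by parts over $\mathbb R$ produce no boundary terms ($\rho,\zeta\to1$ at $\pm\infty$ with sufficient decay). Relative densities $\rho=u/U$, $\zeta=v/V$. Entropy functions: $F_p(z)=\frac{1}{p(p-1)}(z^p-pz+p-1)$ for $p\notin\{0,1\}$, $F_1(z)=z\log z-z+1$; $F_p^*$ its Legendre transform. Relative entropy $\mathcal E_p(\mathbf u|\mathbf U)=\int_{\mathbb R}\big(UF_p(\rho)+VF_p(\zeta)\big)\mathrm dy$. For $\alpha>0,p>0$, $\Phi_{p,\alpha}(z)=\frac{\alpha}{p-1}\big((z+1)^{(p-1)/p}-1\big)\big((z+1)^{\alpha/p}-1\big)$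 for $z>-1$ ($p\ne1$; for $p=1$ its limit $\alpha\log(z+1)((z+1)^\alpha-1)$), $+\infty$ for $z\le-1$, and $\widehat M_{p,\alpha}:=\sup_{z\ne0}\frac{\alpha^2}{4p^2}\frac{z^2}{\Phi_{p,\alpha}(z)}$. $\|\cdot\|_{L^\infty}$ is the supremum of the absolute value. *)

theory Defs
  imports "HOL-Analysis.Analysis"
begin

definition Fent :: "real \<Rightarrow> real \<Rightarrow> real" where
  "Fent p z = (if p = 1 then z * ln z - z + 1
               else (z powr p - p * z + p - 1) / (p * (p - 1)))"

definition dFent :: "real \<Rightarrow> real \<Rightarrow> real" where
  "dFent p z = (if p = 1 then ln z else (z powr (p - 1) - 1) / (p - 1))"

definition ddFent :: "real \<Rightarrow> real \<Rightarrow> real" where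
  "ddFent p z = z powr (p - 2)"

text \<open>Legendre transform of F_p (F_p is defined on [0,\<infinity>)).\<close>
definition Fstar :: "real \<Rightarrow> real \<Rightarrow> real" where
  "Fstar p s = Sup ((\<lambda>z. s * z - Fent p z) ` {0..})"

text \<open>Phi_{p,alpha}(z) for z > -1 (it is +\<infinity> for z \<le> -1).\<close>
definition Phi :: "real \<Rightarrow> real \<Rightarrow> real \<Rightarrow> real" where
  "Phi p a z = (if p = 1 then a * ln (z + 1) * ((z + 1) powr a - 1)
                else a / (p - 1) * ((z + 1) powr ((p - 1) / p) - 1) * ((z + 1) powr (a / p) - 1))"

text \<open>M-hat = sup over z \<noteq> 0 of a^2/(4p^2) * z^2 / Phi(z); for z \<le> -1 the quotient
  is z^2/(+\<infinity>) = 0.\<close>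
definition Mhat :: "real \<Rightarrow> real \<Rightarrow> real" where
  "Mhat p a = Sup ((\<lambda>z. if z \<le> -1 then 0 else a^2 / (4 * p^2) * z^2 / Phi p a z) ` (UNIV - {0}))"

definition Linf :: "(real \<Rightarrow> real) \<Rightarrow> real" where
  "Linf f = Sup (range (\<lambda>y. \<bar>f y\<bar>))"

definition dtau :: "(real \<Rightarrow> real \<Rightarrow> real) \<Rightarrow> real \<Rightarrow> real \<Rightarrow> real" where
  "dtau w t y = deriv (\<lambda>s. w s y) t"

definition dy :: "(real \<Rightarrow> real \<Rightarrow> real) \<Rightarrow> real \<Rightarrow> real \<Rightarrow> real" where
  "dy w t y = deriv (w t) y"

definition dyy :: "(real \<Rightarrow> real \<Rightarrow> real) \<Rightarrow> real \<Rightarrow> real \<Rightarrow> real" where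
  "dyy w t y = deriv (\<lambda>z. deriv (w t) z) y"

definition sim_profile ::
  "real \<Rightarrow> real \<Rightarrow> real \<Rightarrow> real \<Rightarrow> real \<Rightarrow> real \<Rightarrow>
   (real \<Rightarrow> real) \<Rightarrow> (real \<Rightarrow> real) \<Rightarrow> (real \<Rightarrow> real) \<Rightarrow> bool" where
  "sim_profile d1 d2 \<alpha> \<beta> Am Ap U V \<Lambda> \<longleftrightarrow>
     (\<forall>y. U y > 0 \<and> V y > 0) \<and>
     bounded (range U) \<and> bounded (range V) \<and>
     (\<exists>c>0. \<forall>y. c \<le> U y \<and> c \<le> V y) \<and>
     (\<forall>y. U differentiable at y \<and> deriv U differentiable at y \<and>
          V differentiable at y \<and> deriv V differentiable at y) \<and>
     continuous_on UNIV (deriv (deriv U)) \<and> continuous_on UNIV (deriv (deriv V)) \<and>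
     (\<forall>y. d1 * deriv (deriv U) y + y / 2 * deriv U y + \<alpha> * \<Lambda> y = 0) \<and>
     (\<forall>y. d2 * deriv (deriv V) y + y / 2 * deriv V y - \<beta> * \<Lambda> y = 0) \<and>
     (\<forall>y. U y powr \<alpha> = V y powr \<beta>) \<and>
     (U \<longlongrightarrow> Am powr \<beta>) at_bot \<and> (U \<longlongrightarrow> Ap powr \<beta>) at_top \<and>
     (V \<longlongrightarrow> Am powr \<alpha>) at_bot \<and> (V \<longlongrightarrow> Ap powr \<alpha>) at_top"

definition scaled_solution ::
  "real \<Rightarrow> real \<Rightarrow> real \<Rightarrow> real \<Rightarrow> real \<Rightarrow> real \<Rightarrow> real \<Rightarrow>
   (real \<Rightarrow> real \<Rightarrow> real) \<Rightarrow> (real \<Rightarrow> real \<Rightarrow> real) \<Rightarrow> bool" where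
  "scaled_solution d1 d2 k \<alpha> \<beta> Am Ap u v \<longleftrightarrow>
     (\<forall>t\<ge>0. \<forall>y. u t y > 0 \<and> v t y > 0) \<and>
     continuous_on ({0..} \<times> UNIV) (\<lambda>(t, y). u t y) \<and>
     continuous_on ({0..} \<times> UNIV) (\<lambda>(t, y). v t y) \<and>
     (\<forall>t>0. \<forall>y. (\<lambda>s. u s y) differentiable at t \<and> u t differentiable at y \<and>
                 deriv (u t) differentiable at y \<and>
                 (\<lambda>s. v s y) differentiable at t \<and> v t differentiable at y \<and>
                 deriv (v t) differentiable at y) \<and>
     continuous_on ({0<..} \<times> UNIV) (\<lambda>(t, y). dtau u t y) \<and>
     continuous_on ({0<..} \<times> UNIV) (\<lambda>(t, y). dy u t y) \<and>
     continuous_on ({0<..} \<times> UNIV) (\<lambda>(t, y). dyy u t y) \<and>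
     continuous_on ({0<..} \<times> UNIV) (\<lambda>(t, y). dtau v t y) \<and>
     continuous_on ({0<..} \<times> UNIV) (\<lambda>(t, y). dy v t y) \<and>
     continuous_on ({0<..} \<times> UNIV) (\<lambda>(t, y). dyy v t y) \<and>
     (\<forall>t>0. \<forall>y. dtau u t y = d1 * dyy u t y + y / 2 * dy u t y
                   + exp t * \<alpha> * k * (v t y powr \<beta> - u t y powr \<alpha>)) \<and>
     (\<forall>t>0. \<forall>y. dtau v t y = d2 * dyy v t y + y / 2 * dy v t y
                   - exp t * \<beta> * k * (v t y powr \<beta> - u t y powr \<alpha>)) \<and>
     (\<forall>t>0. (u t \<longlongrightarrow> Am powr \<beta>) at_bot \<and> (u t \<longlongrightarrow> Ap powr \<beta>) at_top \<and>
            (v t \<longlongrightarrow> Am powr \<alpha>) at_bot \<and> (v t \<longlongrightarrow> Ap powr \<alpha>) at_top)"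

definition rdens :: "(real \<Rightarrow> real \<Rightarrow> real) \<Rightarrow> (real \<Rightarrow> real) \<Rightarrow> real \<Rightarrow> real \<Rightarrow> real" where
  "rdens w W t y = w t y / W y"

definition entropy_density ::
  "real \<Rightarrow> (real \<Rightarrow> real) \<Rightarrow> (real \<Rightarrow> real) \<Rightarrow>
   (real \<Rightarrow> real \<Rightarrow> real) \<Rightarrow> (real \<Rightarrow> real \<Rightarrow> real) \<Rightarrow> real \<Rightarrow> real \<Rightarrow> real" where
  "entropy_density p U V u v t y =
     U y * Fent p (rdens u U t y) + V y * Fent p (rdens v V t y)"

definition relent ::
  "real \<Rightarrow> (real \<Rightarrow> real) \<Rightarrow> (real \<Rightarrow> real) \<Rightarrow>
   (real \<Rightarrow> real \<Rightarrow> real) \<Rightarrow> (real \<Rightarrow> real \<Rightarrow> real) \<Rightarrow> real \<Rightarrow> real" where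
  "relent p U V u v t = integral UNIV (entropy_density p U V u v t)"

text \<open>For one component (w, W, diffusion d) at time t: the integrals appearing when
  the entropy dissipation is computed are finite, and the two integrations by parts
  over the real line produce no boundary terms.\<close>
definition component_regular ::
  "real \<Rightarrow> real \<Rightarrow> (real \<Rightarrow> real) \<Rightarrow> (real \<Rightarrow> real) \<Rightarrow>
   (real \<Rightarrow> real \<Rightarrow> real) \<Rightarrow> real \<Rightarrow> bool" where
  "component_regular p d W \<Lambda> w t \<longleftrightarrow>
     (\<lambda>y. ddFent p (rdens w W t y) * W y * (dy (rdens w W) t y)^2) integrable_on UNIV \<and>
     (\<lambda>y. dFent p (rdens w W t y) * deriv (\<lambda>z. W z * dy (rdens w W) t z) y) integrable_on UNIV \<and>
     (\<lambda>y. dFent p (rdens w W t y) * (d * deriv W y + y / 2 * W y) * dy (rdens w W) t y)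
        integrable_on UNIV \<and>
     (\<lambda>y. Fent p (rdens w W t y) * \<Lambda> y) integrable_on UNIV \<and>
     (\<lambda>y. \<Lambda> y * rdens w W t y * dFent p (rdens w W t y)) integrable_on UNIV \<and>
     ((\<lambda>y. dFent p (rdens w W t y) * W y * dy (rdens w W) t y) \<longlongrightarrow> 0) at_top \<and>
     ((\<lambda>y. dFent p (rdens w W t y) * W y * dy (rdens w W) t y) \<longlongrightarrow> 0) at_bot \<and>
     ((\<lambda>y. Fent p (rdens w W t y) * (d * deriv W y + y / 2 * W y)) \<longlongrightarrow> 0) at_top \<and>
     ((\<lambda>y. Fent p (rdens w W t y) * (d * deriv W y + y / 2 * W y)) \<longlongrightarrow> 0) at_bot"

definition entropy_regular ::
  "real \<Rightarrow> real \<Rightarrow> real \<Rightarrow> real \<Rightarrow> real \<Rightarrow>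
   (real \<Rightarrow> real) \<Rightarrow> (real \<Rightarrow> real) \<Rightarrow> (real \<Rightarrow> real) \<Rightarrow>
   (real \<Rightarrow> real \<Rightarrow> real) \<Rightarrow> (real \<Rightarrow> real \<Rightarrow> real) \<Rightarrow> bool" where
  "entropy_regular p d1 d2 \<alpha> \<beta> U V \<Lambda> u v \<longleftrightarrow>
     \<comment> \<open>relative entropy finite for all tau \<ge> 0 (in particular E_p(0) < \<infinity>)\<close>
     (\<forall>t\<ge>0. entropy_density p U V u v t integrable_on UNIV) \<and>
     \<comment> \<open>differentiable, with differentiation under the integral sign\<close>
     (\<forall>t>0. (\<lambda>y. dFent p (rdens u U t y) * dtau u t y + dFent p (rdens v V t y) * dtau v t y)
               integrable_on UNIV \<and>
            (relent p U V u v has_real_derivative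
               integral UNIV (\<lambda>y. dFent p (rdens u U t y) * dtau u t y
                                 + dFent p (rdens v V t y) * dtau v t y)) (at t)) \<and>
     \<comment> \<open>the remaining integrals are finite, no boundary terms\<close>
     (\<forall>t>0. component_regular p d1 U \<Lambda> u t \<and> component_regular p d2 V \<Lambda> v t \<and>
            (\<lambda>y. (v t y powr \<beta> - u t y powr \<alpha>) * dFent p (rdens u U t y)) integrable_on UNIV \<and>
            (\<lambda>y. (v t y powr \<beta> - u t y powr \<alpha>) * dFent p (rdens v V t y)) integrable_on UNIV)"

end

theory Submission
  imports Defs
begin


lemma bern_aux:
  fixes x r :: real
  assumes x: "x > 0"
  shows "\<exists>\<xi>>0. (x powr r - r * x) - (1 - r) = (x - 1) * (r * \<xi> powr (r - 1) - r)
           \<and> (x > 1 \<longrightarrow> \<xi> > 1) \<and> (x < 1 \<longrightarrow> \<xi> < 1)"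
proof -
  have D: "\<And>y. y > 0 \<Longrightarrow> ((\<lambda>y. y powr r - r * y) has_real_derivative (r * y powr (r - 1) - r)) (at y)"
    by (auto intro!: derivative_eq_intros)
  consider "x = 1" | "x > 1" | "x < 1" by linarith
  then show ?thesis
  proof cases
    case 1 then show ?thesis by (intro exI[of _ 1]) auto
  next
    case 2
    obtain z where z: "1 < z" "z < x" "(x powr r - r * x) - (1 powr r - r * 1) = (x - 1) * (r * z powr (r - 1) - r)"
      using MVT2[of 1 x "\<lambda>y. y powr r - r * y" "\<lambda>y. r * y powr (r - 1) - r"] 2 D by force
    then show ?thesis using 2 by (intro exI[of _ z]) auto
  next
    case 3
    obtain z where z: "x < z" "z < 1" "(1 powr r - r * 1) - (x powr r - r * x) = (1 - x) * (r * z powr (r - 1) - r)"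
      using MVT2[of x 1 "\<lambda>y. y powr r - r * y" "\<lambda>y. r * y powr (r - 1) - r"] 3 D x by force
    then show ?thesis using 3 x by (intro exI[of _ z]) (auto simp: algebra_simps)
  qed
qed

lemma pw_ge1: "(\<xi>::real) \<ge> 1 \<Longrightarrow> s \<ge> 0 \<Longrightarrow> \<xi> powr s \<ge> 1"
  using powr_mono2[of s 1 \<xi>] by simp
lemma pw_le1: "(\<xi>::real) \<ge> 1 \<Longrightarrow> s \<le> 0 \<Longrightarrow> \<xi> powr s \<le> 1"
  using powr_mono2'[of s 1 \<xi>] by simp
lemma pw_ge1': "(\<xi>::real) > 0 \<Longrightarrow> \<xi> \<le> 1 \<Longrightarrow> s \<le> 0 \<Longrightarrow> \<xi> powr s \<ge> 1"
  using powr_mono2'[of s \<xi> 1] by simp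
lemma pw_le1': "(\<xi>::real) > 0 \<Longrightarrow> \<xi> \<le> 1 \<Longrightarrow> s \<ge> 0 \<Longrightarrow> \<xi> powr s \<le> 1"
  using powr_mono2[of s \<xi> 1] by simp

lemma bern_ge:
  fixes x r :: real
  assumes x: "x > 0" and r: "r \<ge> 1 \<or> r \<le> 0"
  shows "1 + r * (x - 1) \<le> x powr r"
proof -
  obtain \<xi> where \<xi>: "\<xi> > 0" "(x powr r - r * x) - (1 - r) = (x - 1) * (r * \<xi> powr (r - 1) - r)"
     "x > 1 \<longrightarrow> \<xi> > 1" "x < 1 \<longrightarrow> \<xi> < 1" using bern_aux[OF x, of r] by blast
  have "0 \<le> (x - 1) * (r * (\<xi> powr (r - 1) - 1))"
  proof (cases "x > 1")
    case True
    then have "\<xi> > 1" using \<xi> by auto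
    then have "(\<xi> powr (r - 1) \<ge> 1 \<and> r \<ge> 1) \<or> (\<xi> powr (r - 1) \<le> 1 \<and> r \<le> 0)"
      using r pw_ge1[of \<xi> "r - 1"] pw_le1[of \<xi> "r - 1"] by auto
    then have "r * (\<xi> powr (r - 1) - 1) \<ge> 0" by (auto intro: mult_nonneg_nonneg mult_nonpos_nonpos)
    then show ?thesis using True by simp
  next
    case False
    show ?thesis
    proof (cases "x < 1")
      case True
      then have "\<xi> < 1" "\<xi> > 0" using \<xi> by auto
      then have "(\<xi> powr (r - 1) \<le> 1 \<and> r \<ge> 1) \<or> (\<xi> powr (r - 1) \<ge> 1 \<and> r \<le> 0)"
        using r pw_ge1'[of \<xi> "r - 1"] pw_le1'[of \<xi> "r - 1"] by auto
      then have "r * (\<xi> powr (r - 1) - 1) \<le> 0" by (auto intro: mult_nonneg_nonpos mult_nonpos_nonneg)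
      then show ?thesis using True by (simp add: mult_nonpos_nonpos)
    qed (use False in auto)
  qed
  then show ?thesis using \<xi> by (simp add: algebra_simps)
qed

lemma bern_le:
  fixes x r :: real
  assumes x: "x > 0" and r: "0 \<le> r" "r \<le> 1"
  shows "x powr r \<le> 1 + r * (x - 1)"
proof -
  obtain \<xi> where \<xi>: "\<xi> > 0" "(x powr r - r * x) - (1 - r) = (x - 1) * (r * \<xi> powr (r - 1) - r)"
     "x > 1 \<longrightarrow> \<xi> > 1" "x < 1 \<longrightarrow> \<xi> < 1" using bern_aux[OF x, of r] by blast
  have "(x - 1) * (r * (\<xi> powr (r - 1) - 1)) \<le> 0"
  proof (cases "x > 1")
    case True
    then have "\<xi> > 1" using \<xi> by auto
    then have "\<xi> powr (r - 1) \<le> 1"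
      using r pw_le1[of \<xi> "r - 1"] by auto
    then have "r * (\<xi> powr (r - 1) - 1) \<le> 0" using r by (auto intro: mult_nonneg_nonpos)
    then show ?thesis using True by (simp add: mult_nonneg_nonpos)
  next
    case False
    show ?thesis
    proof (cases "x < 1")
      case True
      then have "\<xi> < 1" "\<xi> > 0" using \<xi> by auto
      then have "\<xi> powr (r - 1) \<ge> 1"
        using r pw_ge1'[of \<xi> "r - 1"] by auto
      then have "r * (\<xi> powr (r - 1) - 1) \<ge> 0" using r by (auto intro: mult_nonneg_nonneg)
      then show ?thesis using True by (simp add: mult_nonpos_nonneg)
    qed (use False in auto)
  qed
  then show ?thesis using \<xi> by (simp add: algebra_simps)
qed



lemma Fent_deriv:
  fixes p z :: real assumes z: "z > 0" and p: "p > 0"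
  shows "(Fent p has_real_derivative dFent p z) (at z)"
proof (cases "p = 1")
  case True
  have e: "Fent p = (\<lambda>z. z * ln z - z + 1)" using True by (auto simp: Fent_def fun_eq_iff)
  have X: "dFent p z = ln z + z * (1 / z) - 1" using True z by (simp add: dFent_def)
  show ?thesis unfolding e X using z
    by (auto intro!: derivative_eq_intros)
next
  case False
  have e: "Fent p = (\<lambda>z. (z powr p - p * z + p - 1) / (p * (p - 1)))" using False by (auto simp: Fent_def fun_eq_iff)
  have X: "(p * z powr (p - 1) - p * 1) / (p * (p - 1)) = dFent p z"
    using False p by (auto simp: dFent_def field_simps)
  show ?thesis unfolding e using z False p
    by (auto intro!: derivative_eq_intros simp: X[symmetric])
qed

lemma dFent_deriv:
  fixes p z :: real assumes z: "z > 0"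
  shows "(dFent p has_real_derivative ddFent p z) (at z)"
proof (cases "p = 1")
  case True
  have e: "dFent p = (\<lambda>z. ln z)" using True by (auto simp: dFent_def fun_eq_iff)
  have X: "ddFent p z = 1 / z" using True z by (simp add: ddFent_def powr_minus field_simps)
  show ?thesis unfolding e X using z
    by (auto intro!: derivative_eq_intros)
next
  case False
  have e: "dFent p = (\<lambda>z. (z powr (p - 1) - 1) / (p - 1))" using False by (auto simp: dFent_def fun_eq_iff)
  have X: "((p - 1) * z powr (p - 1 - 1) - 0) / (p - 1) = ddFent p z"
    using False by (auto simp: ddFent_def field_simps)
  show ?thesis unfolding e using z
    by (auto intro!: derivative_eq_intros simp: X[symmetric])
qed

lemma F_minus:
  fixes p z :: real assumes z: "z > 0" and p: "p > 0"
  shows "Fent p z - z * dFent p z = (1 - z powr p) / p"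
proof (cases "p = 1")
  case True then show ?thesis using z by (simp add: Fent_def dFent_def)
next
  case False
  have zz: "z * z powr (p - 1) = z powr p" using z by (simp add: powr_diff)
  have pp: "p * (p - 1) \<noteq> 0" "p - 1 \<noteq> 0" using False p by auto
  have "Fent p z - z * dFent p z = (z powr p - p * z + p - 1) / (p * (p - 1)) - (z powr p - z) / (p - 1)"
    using False zz by (simp add: Fent_def dFent_def right_diff_distrib)
  also have "\<dots> = ((z powr p - p * z + p - 1) - p * (z powr p - z)) / (p * (p - 1))"
    using pp p by (simp add: diff_divide_distrib)
  also have "\<dots> = ((1 - z powr p) * (p - 1)) / (p * (p - 1))"
    by (simp add: algebra_simps)
  also have "\<dots> = (1 - z powr p) / p" using pp by simp
  finally show ?thesis .
qed

lemma Fent_nonneg: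
  fixes p z :: real assumes z: "z > 0" and p: "p > 0"
  shows "Fent p z \<ge> 0"
proof -
  consider "p = 1" | "p > 1" | "p < 1" by linarith
  then show ?thesis
  proof cases
    case 1
    have "ln (1/z) \<le> 1/z - 1" using z by (intro ln_le_minus_one) auto
    then have "- ln z \<le> 1/z - 1" using z by (simp add: ln_div)
    then have "z * (- ln z) \<le> z * (1/z - 1)" using z by (intro mult_left_mono) auto
    then show ?thesis using 1 z by (simp add: Fent_def algebra_simps)
  next
    case 2
    have "1 + p * (z - 1) \<le> z powr p" using z 2 by (intro bern_ge) auto
    then have "0 \<le> z powr p - p * z + p - 1" by (simp add: algebra_simps)
    then show ?thesis using 2 by (auto simp: Fent_def intro!: divide_nonneg_pos)
  next
    case 3
    have "z powr p \<le> 1 + p * (z - 1)" using z 3 p by (intro bern_le) auto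
    then have "z powr p - p * z + p - 1 \<le> 0" by (simp add: algebra_simps)
    moreover have "p * (p - 1) < 0" using 3 p by (simp add: mult_pos_neg)
    ultimately show ?thesis using 3 by (auto simp: Fent_def intro!: divide_nonpos_neg)
  qed
qed



lemma component_H:
  fixes d c p :: real and w W \<Lambda> :: "real \<Rightarrow> real" and y :: real
  assumes wpos: "\<And>y. w y > 0" and Wpos: "\<And>y. W y > 0"
    and wd: "\<And>y. w differentiable at y" "\<And>y. deriv w differentiable at y"
    and Wd: "\<And>y. W differentiable at y" "\<And>y. deriv W differentiable at y"
    and Weq: "\<And>y. c * \<Lambda> y = - (d * deriv (deriv W) y + y / 2 * deriv W y)"
    and p: "p > 0"
  shows "((\<lambda>y. d * dFent p (w y / W y) * W y * deriv (\<lambda>y. w y / W y) y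
                + Fent p (w y / W y) * (d * deriv W y + y / 2 * W y)) has_real_derivative
      (dFent p (w y / W y) * (d * deriv (deriv w) y + y / 2 * deriv w y)
       + d * ddFent p (w y / W y) * W y * (deriv (\<lambda>y. w y / W y) y)^2
       + 1/2 * W y * Fent p (w y / W y)
       - c * \<Lambda> y * (Fent p (w y / W y) - (w y / W y) * dFent p (w y / W y)))) (at y)"
proof -
  define w1 where "w1 = deriv w"
  define w2 where "w2 = deriv w1"
  define W1 where "W1 = deriv W"
  define W2 where "W2 = deriv W1"
  define \<rho> where "\<rho> = (\<lambda>y. w y / W y)"
  define \<rho>1 where "\<rho>1 = (\<lambda>y. (w1 y * W y - w y * W1 y) / (W y)^2)"
  have Dw: "\<And>y. (w has_real_derivative w1 y) (at y)" unfolding w1_def using wd(1) DERIV_deriv_iff_real_differentiable by blast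
  have Dw1: "\<And>y. (w1 has_real_derivative w2 y) (at y)" unfolding w2_def w1_def using wd(2) DERIV_deriv_iff_real_differentiable by blast
  have DW: "\<And>y. (W has_real_derivative W1 y) (at y)" unfolding W1_def using Wd(1) DERIV_deriv_iff_real_differentiable by blast
  have DW1: "\<And>y. (W1 has_real_derivative W2 y) (at y)" unfolding W2_def W1_def using Wd(2) DERIV_deriv_iff_real_differentiable by blast
  have Wnz: "\<And>y. W y \<noteq> 0" using Wpos by (metis less_irrefl)
  have Drho: "\<And>y. (\<rho> has_real_derivative \<rho>1 y) (at y)"
    unfolding \<rho>_def \<rho>1_def
    by (rule derivative_eq_intros Dw DW refl | simp add: Wnz power2_eq_square)+
  have drho: "deriv \<rho> = \<rho>1" using Drho DERIV_imp_deriv by blast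
  have rpos: "\<And>y. \<rho> y > 0" unfolding \<rho>_def using wpos Wpos by simp
  define Q where "Q = (\<lambda>y. w1 y - w y * W1 y / W y)"
  have WQ: "\<And>y. W y * \<rho>1 y = Q y" unfolding Q_def \<rho>1_def using Wnz
    by (simp add: field_simps power2_eq_square)
  define Q1 where "Q1 = (\<lambda>y. w2 y - ((w1 y * W1 y + w y * W2 y) * W y - w y * W1 y * W1 y) / (W y)^2)"
  have DQ: "(Q has_real_derivative Q1 y) (at y)"
    unfolding Q_def Q1_def
    by (rule derivative_eq_intros Dw DW Dw1 DW1 refl | simp add: Wnz power2_eq_square)+
  have DF1: "((\<lambda>y. dFent p (\<rho> y)) has_real_derivative ddFent p (\<rho> y) * \<rho>1 y) (at y)"
    by (rule DERIV_chain2[OF dFent_deriv[OF rpos] Drho])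
  have DF: "((\<lambda>y. Fent p (\<rho> y)) has_real_derivative dFent p (\<rho> y) * \<rho>1 y) (at y)"
    by (rule DERIV_chain2[OF Fent_deriv[OF rpos p] Drho])
  have DG: "((\<lambda>y. d * W1 y + y / 2 * W y) has_real_derivative d * W2 y + (1/2 * W y + y / 2 * W1 y)) (at y)"
    by (rule derivative_eq_intros DW DW1 refl | simp)+
  have eqH: "(\<lambda>y. d * dFent p (w y / W y) * W y * deriv (\<lambda>y. w y / W y) y
                + Fent p (w y / W y) * (d * deriv W y + y / 2 * W y))
        = (\<lambda>y. d * dFent p (\<rho> y) * Q y + Fent p (\<rho> y) * (d * W1 y + y / 2 * W y))"
    using WQ by (auto simp: fun_eq_iff drho[unfolded \<rho>_def] W1_def mult.assoc \<rho>_def)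
  have DH: "((\<lambda>y. d * dFent p (\<rho> y) * Q y + Fent p (\<rho> y) * (d * W1 y + y / 2 * W y)) has_real_derivative
     d * (ddFent p (\<rho> y) * \<rho>1 y) * Q y + d * dFent p (\<rho> y) * Q1 y
     + (dFent p (\<rho> y) * \<rho>1 y * (d * W1 y + y / 2 * W y) + Fent p (\<rho> y) * (d * W2 y + (1/2 * W y + y / 2 * W1 y)))) (at y)"
    by (rule derivative_eq_intros DF1 DF DQ DG refl | simp)+
  have fin: "d * (ddFent p (\<rho> y) * \<rho>1 y) * Q y + d * dFent p (\<rho> y) * Q1 y
     + (dFent p (\<rho> y) * \<rho>1 y * (d * W1 y + y / 2 * W y) + Fent p (\<rho> y) * (d * W2 y + (1/2 * W y + y / 2 * W1 y)))
     = dFent p (\<rho> y) * (d * w2 y + y / 2 * w1 y)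
       + d * ddFent p (\<rho> y) * W y * (\<rho>1 y)^2
       + 1/2 * W y * Fent p (\<rho> y)
       - (- (d * W2 y + y / 2 * W1 y)) * (Fent p (\<rho> y) - \<rho> y * dFent p (\<rho> y))"
  proof -
    have q: "Q y = W y * \<rho>1 y" using WQ by simp
    have e: "d * Q1 y + \<rho>1 y * (d * W1 y + y / 2 * W y) + \<rho> y * (d * W2 y + y / 2 * W1 y)
          = d * w2 y + y / 2 * w1 y"
      unfolding Q1_def \<rho>1_def \<rho>_def using Wnz[of y]
      by (simp add: field_simps power2_eq_square)
    have e2: "dFent p (\<rho> y) * (d * Q1 y + \<rho>1 y * (d * W1 y + y / 2 * W y) + \<rho> y * (d * W2 y + y / 2 * W1 y))
          = dFent p (\<rho> y) * (d * w2 y + y / 2 * w1 y)" using e by simp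
    show ?thesis unfolding q using e2 by (simp add: algebra_simps power2_eq_square)
  qed
  show ?thesis
    unfolding eqH Weq drho[folded \<rho>_def] using DH fin
    by (simp add: \<rho>_def w1_def w2_def W1_def W2_def drho[unfolded \<rho>_def])
qed



lemma cs_aux:
  fixes p a b l :: real
  assumes p: "p > 0" and a: "a > 0" and ab: "a \<le> b" and l: "l > 0"
  shows "(b powr p - a powr p) / p \<le>
         (l * ((b powr (p + 1) - a powr (p + 1)) / (p + 1)) + (dFent p b - dFent p a) / l) / 2"
proof -
  define h where "h = (\<lambda>x. (l * (x powr (p + 1) / (p + 1)) + dFent p x / l) / 2 - x powr p / p)"
  have "h a \<le> h b"
  proof (rule DERIV_nonneg_imp_nondecreasing[OF ab])
    fix x assume x: "a \<le> x" "x \<le> b"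
    then have x0: "x > 0" using a by simp
    have d1: "((\<lambda>x. x powr (p + 1) / (p + 1)) has_real_derivative x powr p) (at x)"
    proof -
      have e: "(p + 1) * x powr (p + 1 - 1) / (p + 1) = x powr p" using p by simp
      show ?thesis using DERIV_cdivide[OF has_real_derivative_powr[OF x0, of "p + 1"], of "p + 1"] unfolding e .
    qed
    have d2: "((\<lambda>x. x powr p / p) has_real_derivative x powr (p - 1)) (at x)"
    proof -
      have e: "p * x powr (p - 1) / p = x powr (p - 1)" using p by simp
      show ?thesis using DERIV_cdivide[OF has_real_derivative_powr[OF x0, of "p"], of "p"] unfolding e .
    qed
    have D: "(h has_real_derivative (l * (x powr p) + ddFent p x / l) / 2 - x powr (p - 1)) (at x)"
      unfolding h_def
      by (rule DERIV_diff[OF DERIV_cdivide[OF DERIV_add[OF DERIV_cmult[OF d1] DERIV_cdivide[OF dFent_deriv[OF x0]]]] d2])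
    have e1: "x powr p = x powr (p - 2) * x^2"
    proof -
      have "x powr p = x powr ((p - 2) + 2)" by simp
      also have "\<dots> = x powr (p - 2) * x powr 2" by (rule powr_add)
      also have "x powr 2 = x^2" using x0 by (simp add: powr_numeral)
      finally show ?thesis .
    qed
    have e2: "x powr (p - 1) = x powr (p - 2) * x"
    proof -
      have "x powr (p - 1) = x powr ((p - 2) + 1)" by simp
      also have "\<dots> = x powr (p - 2) * x powr 1" by (rule powr_add)
      finally show ?thesis using x0 by simp
    qed
    have g: "(l * (P * x^2) + P / l) / 2 - P * x = P * (l * x - 1)^2 / (2 * l)" for P
      using l by (simp add: field_simps power2_eq_square)
    have "(l * (x powr p) + ddFent p x / l) / 2 - x powr (p - 1)
          = x powr (p - 2) * (l * x - 1)^2 / (2 * l)"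
      unfolding ddFent_def e2 g[symmetric] e1[symmetric] ..
    also have "\<dots> \<ge> 0" using l x0 by simp
    finally show "\<exists>y. (h has_real_derivative y) (at x) \<and> 0 \<le> y" using D by blast
  qed
  then show ?thesis unfolding h_def by (simp add: diff_divide_distrib add_divide_distrib algebra_simps)
qed

lemma cs_ineq:
  fixes p a b :: real
  assumes p: "p > 0" and a: "a > 0" and b: "b > 0"
  shows "((b powr p - a powr p) / p)^2 \<le>
         ((b powr (p + 1) - a powr (p + 1)) / (p + 1)) * (dFent p b - dFent p a)"
proof -
  have main: "((y powr p - x powr p) / p)^2 \<le>
         ((y powr (p + 1) - x powr (p + 1)) / (p + 1)) * (dFent p y - dFent p x)"
    if x: "x > 0" and xy: "x < y" for x y
  proof -
    define I1 where "I1 = (y powr p - x powr p) / p"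
    define I2 where "I2 = (y powr (p + 1) - x powr (p + 1)) / (p + 1)"
    define I0 where "I0 = dFent p y - dFent p x"
    have "x powr p < y powr p" using x xy p by (simp add: powr_less_mono2)
    then have I1: "I1 > 0" unfolding I1_def using p by simp
    have "x powr (p + 1) < y powr (p + 1)" using x xy p by (simp add: powr_less_mono2)
    then have I2: "I2 > 0" unfolding I2_def using p by simp
    have ca: "I1 \<le> (l * I2 + I0 / l) / 2" if "l > 0" for l
      using cs_aux[OF p x less_imp_le[OF xy] that] unfolding I1_def I2_def I0_def .
    have "I1 \<le> ((I1 / I2) * I2 + I0 / (I1 / I2)) / 2"
      using I1 I2 by (intro ca) simp
    moreover have "(I1 / I2) * I2 = I1" "I0 / (I1 / I2) = I0 * I2 / I1" using I2 by auto
    ultimately have "I1 \<le> (I1 + I0 * I2 / I1) / 2" by simp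
    then have "I1 \<le> I0 * I2 / I1" by simp
    then have "I1 * I1 \<le> I0 * I2" using I1 by (simp add: pos_le_divide_eq)
    then have "I1^2 \<le> I2 * I0" by (simp add: power2_eq_square mult.commute)
    then show ?thesis unfolding I1_def I2_def I0_def .
  qed
  consider "a < b" | "a = b" | "b < a" by linarith
  then show ?thesis
  proof cases
    case 1 then show ?thesis using main[OF a 1] by simp
  next
    case 2 then show ?thesis by simp
  next
    case 3
    have h1: "((a powr p - b powr p) / p)^2 \<le>
         ((a powr (p + 1) - b powr (p + 1)) / (p + 1)) * (dFent p a - dFent p b)"
      using main[OF b 3] by simp
    have h2: "((a powr p - b powr p) / p)^2 = ((b powr p - a powr p) / p)^2"
      by (metis minus_diff_eq minus_divide_left power2_minus)
    have h3: "((a powr (p + 1) - b powr (p + 1)) / (p + 1)) * (dFent p a - dFent p b)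
       = ((b powr (p + 1) - a powr (p + 1)) / (p + 1)) * (dFent p b - dFent p a)"
      by (simp add: diff_divide_distrib algebra_simps)
    show ?thesis using h1 h2 h3 by linarith
  qed
qed



lemma neg_mult_mono: "(u::real) \<le> u0 \<Longrightarrow> u0 \<le> 0 \<Longrightarrow> v \<le> v0 \<Longrightarrow> v0 \<le> 0 \<Longrightarrow> u0 * v0 \<le> u * v"
proof -
  assume a: "u \<le> u0" "u0 \<le> 0" "v \<le> v0" "v0 \<le> 0"
  have "(-u0) * (-v0) \<le> (-u) * (-v)" using a by (intro mult_mono) auto
  then show ?thesis by simp
qed

lemma Phi_lower_aux:
  fixes s A w :: real
  assumes s: "s > 0" and A: "A \<ge> 2" and w: "w > 0"
  shows "min (s / (2 * 2 powr s)) (1 - 2 powr (- s)) * (w - 1)^2 \<le> (1 - w powr (- s)) * (w powr A - 1)"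
proof -
  define c where "c = min (s / (2 * 2 powr s)) (1 - 2 powr (- s))"
  have two: "2 powr s \<ge> 1" using s pw_ge1[of 2 s] by simp
  have c1: "c \<le> s / (2 * 2 powr s)" "c \<le> 1 - 2 powr (- s)" unfolding c_def by auto
  have cs: "c \<le> s"
  proof -
    have "s / (2 * 2 powr s) \<le> s / 1" using two s by (intro divide_left_mono) auto
    then show ?thesis using c1 by simp
  qed
  have sq: "(w - 1)^2 \<ge> 0" by simp
  consider "w < 1" | "w = 1" | "1 < w" "w \<le> 2" | "w > 2" by linarith
  then have "c * (w - 1)^2 \<le> (1 - w powr (- s)) * (w powr A - 1)"
  proof cases
    case 1
    have b1: "1 + (- s) * (w - 1) \<le> w powr (- s)" using w s by (intro bern_ge) auto
    have u: "1 - w powr (- s) \<le> s * (w - 1)" using b1 by (simp add: algebra_simps)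
    have "w powr A \<le> w powr 1" using 1 w A by (intro powr_mono') auto
    then have v: "w powr A - 1 \<le> w - 1" using w by simp
    have "(s * (w - 1)) * (w - 1) \<le> (1 - w powr (- s)) * (w powr A - 1)"
      using u v 1 s by (intro neg_mult_mono) (auto simp: mult_le_0_iff)
    moreover have "c * (w - 1)^2 \<le> s * (w - 1)^2" using cs sq by (intro mult_right_mono)
    ultimately show ?thesis by (simp add: power2_eq_square mult.assoc)
  next
    case 2 then show ?thesis by simp
  next
    case 3
    have b1: "1 + (- s) * (1 / w - 1) \<le> (1 / w) powr (- s)" using w s by (intro bern_ge) auto
    have e: "(1 / w) powr (- s) = w powr s" using w by (simp add: powr_divide powr_minus_divide)
    have ws: "w powr s > 0" using w by simp
    have ws2: "w powr s \<le> 2 powr s" using 3 s by (intro powr_mono2) auto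
    have "1 - w powr (- s) = (w powr s - 1) / w powr s" using ws by (simp add: powr_minus field_simps)
    also have "\<dots> \<ge> (s * (w - 1) / w) / w powr s"
    proof (rule divide_right_mono)
      show "s * (w - 1) / w \<le> w powr s - 1" using b1 e w by (simp add: field_simps)
    qed (use ws in simp)
    finally have u0: "(s * (w - 1) / w) / w powr s \<le> 1 - w powr (- s)" .
    have "s * (w - 1) / (2 * 2 powr s) \<le> (s * (w - 1) / w) / w powr s"
    proof -
      have "w * w powr s \<le> 2 * 2 powr s" using 3 ws ws2 by (intro mult_mono) auto
      then have "s * (w - 1) / (2 * 2 powr s) \<le> s * (w - 1) / (w * w powr s)"
        using 3 s ws w by (intro divide_left_mono) auto
      then show ?thesis by simp
    qed
    with u0 have u: "s / (2 * 2 powr s) * (w - 1) \<le> 1 - w powr (- s)" by simp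
    have b2: "1 + A * (w - 1) \<le> w powr A" using w A by (intro bern_ge) auto
    have v: "w - 1 \<le> w powr A - 1" using b2 A 3 by (smt (verit) mult_le_cancel_right1)
    have "(s / (2 * 2 powr s) * (w - 1)) * (w - 1) \<le> (1 - w powr (- s)) * (w powr A - 1)"
      using u v 3 s pw_le1[of w "- s"] by (intro mult_mono) auto
    moreover have "c * (w - 1)^2 \<le> s / (2 * 2 powr s) * (w - 1)^2" using c1 sq by (intro mult_right_mono)
    ultimately show ?thesis by (simp add: power2_eq_square mult.assoc)
  next
    case 4
    have "w powr (- s) \<le> 2 powr (- s)" using 4 s by (intro powr_mono2') auto
    then have u: "1 - 2 powr (- s) \<le> 1 - w powr (- s)" by simp
    have "w powr 2 \<le> w powr A" using 4 A by (intro powr_mono) auto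
    then have "w^2 \<le> w powr A" using 4 by (simp add: powr_numeral)
    then have v: "(w - 1)^2 \<le> w powr A - 1" using 4 by (simp add: power2_eq_square algebra_simps)
    have "(1 - 2 powr (- s)) * (w - 1)^2 \<le> (1 - w powr (- s)) * (w powr A - 1)"
      using u v c1 4 s pw_le1[of w "- s"] pw_le1[of 2 "- s"] by (intro mult_mono) (auto simp: c_def)
    moreover have "c * (w - 1)^2 \<le> (1 - 2 powr (- s)) * (w - 1)^2" using c1 sq by (intro mult_right_mono)
    ultimately show ?thesis by simp
  qed
  then show ?thesis unfolding c_def .
qed



definition cM :: "real \<Rightarrow> real" where
  "cM s = min (s / (2 * 2 powr s)) (1 - 2 powr (- s))"

lemma cM_pos: "s > 0 \<Longrightarrow> cM s > 0"
proof -
  assume s: "s > 0"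
  have "2 powr (- s) < 2 powr 0" using s by (intro powr_less_mono) auto
  then show ?thesis using s by (simp add: cM_def)
qed

lemma Phi_lower:
  fixes p a z :: real
  assumes p: "0 < p" "p < 1" and a: "2 * p \<le> a" and z: "z > -1"
  shows "a / (1 - p) * cM ((1 - p) / p) * z^2 \<le> Phi p a z"
proof -
  define s where "s = (1 - p) / p"
  have s: "s > 0" using p by (simp add: s_def)
  have A: "a / p \<ge> 2" using a p by (simp add: field_simps)
  have w: "z + 1 > 0" using z by simp
  have e: "Phi p a z = a / (1 - p) * ((1 - (z + 1) powr (- s)) * ((z + 1) powr (a / p) - 1))"
  proof -
    have "(p - 1) / p = - s" by (simp add: s_def minus_divide_left)
    moreover have "a / (p - 1) * (X - 1) * Y = a / (1 - p) * ((1 - X) * Y)" for X Y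
      using p by (simp add: field_simps)
    ultimately show ?thesis using p by (simp add: Phi_def)
  qed
  have "cM s * ((z + 1) - 1)^2 \<le> (1 - (z + 1) powr (- s)) * ((z + 1) powr (a / p) - 1)"
    unfolding cM_def by (rule Phi_lower_aux[OF s A w])
  moreover have "a / (1 - p) \<ge> 0" using p a by simp
  ultimately have "a / (1 - p) * (cM s * z^2) \<le> Phi p a z" unfolding e
    by (intro mult_left_mono) auto
  then show ?thesis by (simp add: s_def mult.assoc)
qed

lemma Mhat_facts:
  fixes p a :: real
  assumes p: "0 < p" "p < 1" and a: "2 * p \<le> a"
  shows "bdd_above ((\<lambda>z. if z \<le> -1 then 0 else a^2 / (4 * p^2) * z^2 / Phi p a z) ` (UNIV - {0}))"
    and "Mhat p a \<ge> 0"
    and "\<And>z. z > -1 \<Longrightarrow> z \<noteq> 0 \<Longrightarrow> Phi p a z > 0 \<and> a^2 / (4 * p^2) * z^2 / Phi p a z \<le> Mhat p a"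
proof -
  define K where "K = a / (1 - p) * cM ((1 - p) / p)"
  have K: "K > 0" unfolding K_def using p a cM_pos[of "(1 - p) / p"] by simp
  define B where "B = a^2 / (4 * p^2) / K"
  have B: "B \<ge> 0" unfolding B_def using K by simp
  have bnd: "Phi p a z > 0 \<and> a^2 / (4 * p^2) * z^2 / Phi p a z \<le> B" if z: "z > -1" "z \<noteq> 0" for z
  proof -
    have L: "K * z^2 \<le> Phi p a z" unfolding K_def using Phi_lower[OF p a z(1)] .
    have "K * z^2 > 0" using K z by simp
    then have P: "Phi p a z > 0" using L by linarith
    have "z^2 / Phi p a z \<le> z^2 / (K * z^2)" using P L z K by (intro divide_left_mono) auto
    also have "\<dots> = 1 / K" using z by simp
    finally have "a^2 / (4 * p^2) * (z^2 / Phi p a z) \<le> a^2 / (4 * p^2) * (1 / K)"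
      by (intro mult_left_mono) auto
    then show ?thesis using P by (simp add: B_def)
  qed
  show bd: "bdd_above ((\<lambda>z. if z \<le> -1 then 0 else a^2 / (4 * p^2) * z^2 / Phi p a z) ` (UNIV - {0}))"
    unfolding bdd_above_def using bnd B
    by (intro exI[of _ B]) (auto simp: not_le)
  have "(\<lambda>z. if z \<le> -1 then 0 else a^2 / (4 * p^2) * z^2 / Phi p a z) (-2) \<le> Mhat p a"
    unfolding Mhat_def by (rule cSUP_upper[OF _ bd]) auto
  then show "Mhat p a \<ge> 0" by simp
  fix z :: real assume z: "z > -1" "z \<noteq> 0"
  have "(\<lambda>z. if z \<le> -1 then 0 else a^2 / (4 * p^2) * z^2 / Phi p a z) z \<le> Mhat p a"
    unfolding Mhat_def by (rule cSUP_upper[OF _ bd]) (use z in auto)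
  then show "Phi p a z > 0 \<and> a^2 / (4 * p^2) * z^2 / Phi p a z \<le> Mhat p a"
    using z bnd[OF z] by simp
qed

lemma Fstar_bdd:
  fixes p k :: real
  assumes p: "0 < p" "p < 1" and k: "k \<le> 1"
  shows "bdd_above ((\<lambda>z. k * z - Fent p z) ` {0..})"
proof -
  define c0 where "c0 = p powr (1 / (1 - p))"
  have c0: "c0 > 0" using p by (simp add: c0_def)
  have c01: "c0 powr (1 - p) = p" using p by (simp add: c0_def powr_powr)
  define D where "D = c0 powr (- p)"
  have D: "D > 0" using c0 by (simp add: D_def)
  have zp: "z powr p \<le> D + p * p * z" if z: "z \<ge> 0" for z
  proof (cases "z = 0")
    case True then show ?thesis using D by simp
  next
    case False
    then have z0: "z > 0" using z by simp
    have "(c0 * z) powr p \<le> 1 + p * (c0 * z - 1)" using z0 c0 p by (intro bern_le) auto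
    then have "c0 powr p * z powr p \<le> 1 + p * (c0 * z - 1)" using z0 c0 by (simp add: powr_mult)
    then have "z powr p \<le> (1 + p * (c0 * z - 1)) / c0 powr p" using c0 by (simp add: field_simps)
    also have "\<dots> \<le> (1 + p * c0 * z) / c0 powr p" using p c0 by (intro divide_right_mono) (auto simp: algebra_simps)
    also have "\<dots> = D + p * (c0 / c0 powr p) * z" using c0 by (simp add: D_def powr_minus field_simps)
    also have "c0 / c0 powr p = c0 powr (1 - p)" using c0 by (simp add: powr_diff)
    finally show ?thesis using c01 by simp
  qed
  define C where "C = (D + p - 1) / (p * (1 - p))"
  have "k * z - Fent p z \<le> C" if z: "z \<ge> 0" for z
  proof -
    have pp: "p * (1 - p) > 0" using p by simp
    have "- Fent p z = (z powr p - p * z + p - 1) / (p * (1 - p))"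
      using p by (simp add: Fent_def field_simps)
    also have "\<dots> \<le> (D + p * p * z - p * z + p - 1) / (p * (1 - p))"
      using zp[OF z] pp by (intro divide_right_mono) auto
    also have "D + p * p * z - p * z + p - 1 = (D + p - 1) - z * (p * (1 - p))" by (simp add: algebra_simps)
    also have "((D + p - 1) - z * (p * (1 - p))) / (p * (1 - p)) = C - z"
      using pp p by (simp add: C_def diff_divide_distrib)
    finally have "- Fent p z \<le> C - z" .
    moreover have "k * z \<le> 1 * z" using k z by (intro mult_right_mono) auto
    ultimately show ?thesis by simp
  qed
  then show ?thesis unfolding bdd_above_def by auto
qed



lemma young: "(m::real) > 0 \<Longrightarrow> L * X \<le> m * X^2 + L^2 / (4 * m)"
proof -
  assume m: "m > 0"
  have "m * X^2 + L^2 / (4 * m) - L * X = (2 * m * X - L)^2 / (4 * m)"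
    using m by (simp add: field_simps power2_eq_square)
  moreover have "(2 * m * X - L)^2 / (4 * m) \<ge> 0" using m by simp
  ultimately show ?thesis by linarith
qed

lemma young2: "(m::real) > 0 \<Longrightarrow> X - m \<le> X^2 / (4 * m)"
proof -
  assume m: "m > 0"
  have "X^2 / (4 * m) - (X - m) = (X - 2 * m)^2 / (4 * m)"
    using m by (simp add: field_simps power2_eq_square)
  moreover have "(X - 2 * m)^2 / (4 * m) \<ge> 0" using m by simp
  ultimately show ?thesis by linarith
qed

lemma caseA_pw:
  fixes \<alpha> p k t L Uy a b :: real
  assumes ap: "\<alpha> = p + 1" and p: "p > 0" and k: "k > 0" and U: "Uy > 0" and a: "a > 0" and b: "b > 0"
  shows "\<alpha> / p * L * (b powr p - a powr p)
          + exp t * \<alpha> * k * ((Uy * b) powr \<alpha> - (Uy * a) powr \<alpha>) * (dFent p a - dFent p b)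
         \<le> exp (- t) * L^2 / (4 * k * Uy powr \<alpha>)"
proof -
  define m where "m = exp t * k * Uy powr \<alpha>"
  have m: "m > 0" unfolding m_def using k U by simp
  define X where "X = \<alpha> * ((b powr p - a powr p) / p)"
  have y: "L * X \<le> m * X^2 + L^2 / (4 * m)" by (rule young[OF m])
  have cs: "((b powr p - a powr p) / p)^2 \<le> ((b powr \<alpha> - a powr \<alpha>) / \<alpha>) * (dFent p b - dFent p a)"
    using cs_ineq[OF p a b] ap by simp
  have "m * X^2 = m * \<alpha>^2 * ((b powr p - a powr p) / p)^2" unfolding X_def by (simp only: power_mult_distrib mult.assoc)
  also have "\<dots> \<le> m * \<alpha>^2 * (((b powr \<alpha> - a powr \<alpha>) / \<alpha>) * (dFent p b - dFent p a))"
    using cs m by (intro mult_left_mono) auto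
  also have "\<dots> = m * \<alpha> * (b powr \<alpha> - a powr \<alpha>) * (dFent p b - dFent p a)"
    using ap p by (simp add: power2_eq_square field_simps)
  finally have mX: "m * X^2 \<le> m * \<alpha> * (b powr \<alpha> - a powr \<alpha>) * (dFent p b - dFent p a)" .
  have R: "exp t * \<alpha> * k * ((Uy * b) powr \<alpha> - (Uy * a) powr \<alpha>) * (dFent p a - dFent p b)
        = - (m * \<alpha> * (b powr \<alpha> - a powr \<alpha>) * (dFent p b - dFent p a))"
    using U a b by (simp add: m_def powr_mult algebra_simps)
  have L: "\<alpha> / p * L * (b powr p - a powr p) = L * X" unfolding X_def by (simp add: field_simps)
  have "exp (- t) * L^2 / (4 * k * Uy powr \<alpha>) = L^2 / (4 * m)"
    by (simp add: m_def exp_minus field_simps)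
  then show ?thesis using y mX R L by linarith
qed



lemma caseB_pw:
  fixes \<alpha> p k t L Uy a b :: real
  assumes p: "0 < p" "p < 1" and pa: "2 * p \<le> \<alpha>" and k: "k > 0" and U: "Uy > 0" and a: "a > 0" and b: "b > 0"
  shows "\<alpha> / p * L * (b powr p - a powr p)
          + exp t * \<alpha> * k * ((Uy * b) powr \<alpha> - (Uy * a) powr \<alpha>) * (dFent p a - dFent p b)
         \<le> exp (- t) * Mhat p \<alpha> * L^2 * a powr (1 + p - \<alpha>) / (k * Uy powr \<alpha>)"
proof -
  have al: "\<alpha> > 0" using p pa by simp
  have M0: "Mhat p \<alpha> \<ge> 0" using Mhat_facts(2)[OF p pa] .
  have rhs0: "exp (- t) * Mhat p \<alpha> * L^2 * a powr (1 + p - \<alpha>) / (k * Uy powr \<alpha>) \<ge> 0"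
    using M0 k U a by simp
  show ?thesis
  proof (cases "a = b")
    case True then show ?thesis using rhs0 by simp
  next
    case False
    define r where "r = b / a"
    have r: "r > 0" "r \<noteq> 1" using a b False by (auto simp: r_def)
    define z where "z = r powr p - 1"
    have z1: "z > -1" using r by (simp add: z_def)
    have z0: "z \<noteq> 0"
    proof
      assume "z = 0"
      then have rp: "r powr p = 1 powr p" by (simp add: z_def)
      show False
      proof (cases "r < 1")
        case True then have "r powr p < 1 powr p" using r p by (intro powr_less_mono2) auto
        then show False using rp by simp
      next
        case False then have "1 powr p < r powr p" using r p by (intro powr_less_mono2) auto
        then show False using rp by simp
      qed
    qed
    obtain PhiP: "Phi p \<alpha> z > 0" and GM: "\<alpha>^2 / (4 * p^2) * z^2 / Phi p \<alpha> z \<le> Mhat p \<alpha>"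
      using Mhat_facts(3)[OF p pa z1 z0] by blast
    have bb: "b = a * r" using a by (simp add: r_def)
    have e1: "b powr p - a powr p = a powr p * z" unfolding z_def bb using a r
      by (simp add: powr_mult algebra_simps)
    define Ra where "Ra = r powr \<alpha>"
    define Rp where "Rp = r powr (p - 1)"
    have e2: "b powr \<alpha> - a powr \<alpha> = a powr \<alpha> * (Ra - 1)" unfolding Ra_def bb using a r
      by (simp add: powr_mult algebra_simps)
    have e3: "dFent p a - dFent p b = a powr (p - 1) * (1 - Rp) / (p - 1)" unfolding Rp_def bb using a r p
      by (simp add: dFent_def powr_mult diff_divide_distrib algebra_simps)
    have e4: "Phi p \<alpha> z = \<alpha> / (p - 1) * (Rp - 1) * (Ra - 1)"
    proof -
      have "(z + 1) powr ((p - 1) / p) = Rp" unfolding z_def Rp_def using r p by (simp add: powr_powr)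
      moreover have "(z + 1) powr (\<alpha> / p) = Ra" unfolding z_def Ra_def using r p by (simp add: powr_powr)
      ultimately show ?thesis using p by (simp add: Phi_def)
    qed
    define m where "m = exp t * k * Uy powr \<alpha> * (a powr \<alpha> * a powr (p - 1)) * Phi p \<alpha> z"
    have m: "m > 0" unfolding m_def using k U a PhiP by simp
    define X where "X = \<alpha> / p * L * (a powr p * z)"
    have LHS: "\<alpha> / p * L * (b powr p - a powr p)
          + exp t * \<alpha> * k * ((Uy * b) powr \<alpha> - (Uy * a) powr \<alpha>) * (dFent p a - dFent p b) = X - m"
    proof -
      have "(Uy * b) powr \<alpha> - (Uy * a) powr \<alpha> = Uy powr \<alpha> * (b powr \<alpha> - a powr \<alpha>)"
        using U a b by (simp add: powr_mult algebra_simps)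
      then have "exp t * \<alpha> * k * ((Uy * b) powr \<alpha> - (Uy * a) powr \<alpha>) * (dFent p a - dFent p b)
          = exp t * \<alpha> * k * Uy powr \<alpha> * (a powr \<alpha> * (Ra - 1)) * (a powr (p - 1) * (1 - Rp) / (p - 1))"
        unfolding e2 e3 by simp
      also have "\<dots> = - m" unfolding m_def e4 using p by (simp add: field_simps)
      finally show ?thesis unfolding X_def e1 by simp
    qed
    have Y: "X - m \<le> X^2 / (4 * m)" by (rule young2[OF m])
    have aq: "a powr (1 + p - \<alpha>) = a powr p * a powr p / (a powr \<alpha> * a powr (p - 1))"
    proof -
      have "1 + p - \<alpha> = (p + p) - (\<alpha> + (p - 1))" by simp
      then have "a powr (1 + p - \<alpha>) = a powr ((p + p) - (\<alpha> + (p - 1)))" by (simp only:)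
      also have "\<dots> = a powr p * a powr p / (a powr \<alpha> * a powr (p - 1))"
        by (simp only: powr_diff powr_add)
      finally show ?thesis .
    qed
    have "X^2 / (4 * m) = exp (- t) * L^2 * a powr (1 + p - \<alpha>) / (k * Uy powr \<alpha>) * (\<alpha>^2 / (4 * p^2) * z^2 / Phi p \<alpha> z)"
      unfolding X_def m_def aq using p k U a PhiP
      by (simp add: exp_minus field_simps power2_eq_square)
    also have "\<dots> \<le> exp (- t) * L^2 * a powr (1 + p - \<alpha>) / (k * Uy powr \<alpha>) * Mhat p \<alpha>"
      using GM k U a by (intro mult_left_mono) auto
    finally show ?thesis using LHS Y by (simp add: mult.commute mult.left_commute)
  qed
qed



lemma int_lim:
  fixes f :: "real \<Rightarrow> real"
  assumes f: "f integrable_on UNIV"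
  shows "(\<lambda>n. integral {- real n..real n} f) \<longlonglongrightarrow> integral UNIV f"
proof (rule LIMSEQ_I)
  fix e :: real assume e: "e > 0"
  have hi: "(f has_integral integral UNIV f) UNIV" using f by (simp add: has_integral_integral)
  then obtain B where B: "B > 0" "\<And>a b. ball 0 B \<subseteq> cbox a b \<Longrightarrow> norm (integral (cbox a b) f - integral UNIV f) < e"
    using e unfolding has_integral_alt'[of f _ UNIV] by auto
  obtain N :: nat where N: "B \<le> real N" using real_arch_simple by blast
  show "\<exists>N. \<forall>n\<ge>N. norm (integral {- real n..real n} f - integral UNIV f) < e"
  proof (intro exI allI impI)
    fix n assume "N \<le> n"
    then have "B \<le> real n" using N by linarith
    then have "ball 0 B \<subseteq> cbox (- real n) (real n)" by (auto simp: dist_real_def)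
    then show "norm (integral {- real n..real n} f - integral UNIV f) < e" using B(2) by simp
  qed
qed

lemma limit_ineq:
  fixes D e L H H' :: "real \<Rightarrow> real" and K1 K2 :: real
  assumes iD: "D integrable_on UNIV" and ie: "e integrable_on UNIV" and iL: "L integrable_on UNIV"
    and dH: "\<And>y. (H has_real_derivative H' y) (at y)"
    and pw: "\<And>y. D y \<le> H' y - K1 * e y + K2 * L y"
    and Ht: "(H \<longlongrightarrow> 0) at_top" and Hb: "(H \<longlongrightarrow> 0) at_bot"
  shows "integral UNIV D \<le> - K1 * integral UNIV e + K2 * integral UNIV L"
proof -
  have step: "integral {- real n..real n} D \<le> (H (real n) - H (- real n)) - K1 * integral {- real n..real n} e + K2 * integral {- real n..real n} L" for n :: nat
  proof -
    define a where "a = - real n"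
    define b where "b = real n"
    have ab: "a \<le> b" by (simp add: a_def b_def)
    have FT: "(H' has_integral (H b - H a)) {a..b}"
      by (rule fundamental_theorem_of_calculus[OF ab])
         (use dH in \<open>auto simp: has_real_derivative_iff_has_vector_derivative intro: has_vector_derivative_at_within\<close>)
    have iDab: "D integrable_on {a..b}" using iD by (rule integrable_on_subinterval) auto
    have ieab: "e integrable_on {a..b}" using ie by (rule integrable_on_subinterval) auto
    have iLab: "L integrable_on {a..b}" using iL by (rule integrable_on_subinterval) auto
    have R: "((\<lambda>y. H' y - K1 * e y + K2 * L y) has_integral ((H b - H a) - K1 * integral {a..b} e + K2 * integral {a..b} L)) {a..b}"
      by (intro has_integral_add has_integral_diff FT has_integral_mult_right integrable_integral ieab iLab)
    have "integral {a..b} D \<le> integral {a..b} (\<lambda>y. H' y - K1 * e y + K2 * L y)"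
      using iDab R pw by (intro integral_le) (auto simp: has_integral_integrable)
    also have "\<dots> = (H b - H a) - K1 * integral {a..b} e + K2 * integral {a..b} L"
      using R by (rule integral_unique)
    finally show ?thesis by (simp add: a_def b_def)
  qed
  have l1: "(\<lambda>n. H (real n)) \<longlonglongrightarrow> 0"
    using filterlim_compose[OF Ht filterlim_real_sequentially] .
  have mb: "filterlim (\<lambda>n. - real n) at_bot sequentially"
    using filterlim_real_sequentially filterlim_uminus_at_top by blast
  have l2: "(\<lambda>n. H (- real n)) \<longlonglongrightarrow> 0"
    using filterlim_compose[OF Hb mb] .
  have lim: "(\<lambda>n. (H (real n) - H (- real n)) - K1 * integral {- real n..real n} e + K2 * integral {- real n..real n} L)
      \<longlonglongrightarrow> (0 - 0) - K1 * integral UNIV e + K2 * integral UNIV L"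
    by (intro tendsto_intros l1 l2 int_lim ie iL)
  show ?thesis
    using LIMSEQ_le[OF int_lim[OF iD] lim] step by auto
qed



lemma aq_bound:
  fixes p \<alpha> a :: real
  assumes p: "0 < p" "p < 1" and q0: "\<alpha> - 1 \<le> p" and q1: "p \<le> \<alpha>" and a: "a > 0"
  shows "a powr (1 + p - \<alpha>) \<le> sqrt (1 + p - \<alpha>) * Fent p a + sqrt (1 + p - \<alpha>) * Fstar p (sqrt (1 + p - \<alpha>)) + 1"
proof -
  define q where "q = 1 + p - \<alpha>"
  define \<kappa> where "\<kappa> = sqrt q"
  have q: "0 \<le> q" "q \<le> 1" using q0 q1 by (auto simp: q_def)
  have k: "0 \<le> \<kappa>" "\<kappa> \<le> 1" "\<kappa> * \<kappa> = q" using q by (auto simp: \<kappa>_def)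
  have "a powr q \<le> 1 + q * (a - 1)" using a q by (intro bern_le) auto
  also have "\<dots> \<le> 1 + q * a" using q by (simp add: algebra_simps)
  also have "\<dots> = 1 + \<kappa> * (\<kappa> * a)" using k by (simp add: mult.assoc[symmetric])
  also have "\<kappa> * a \<le> Fent p a + Fstar p \<kappa>"
  proof -
    have "\<kappa> * a - Fent p a \<le> Fstar p \<kappa>"
      unfolding Fstar_def by (rule cSUP_upper[OF _ Fstar_bdd[OF p k(2)]]) (use a in auto)
    then show ?thesis by simp
  qed
  then have "1 + \<kappa> * (\<kappa> * a) \<le> 1 + \<kappa> * (Fent p a + Fstar p \<kappa>)" using k by (simp add: mult_left_mono)
  finally show ?thesis by (simp add: q_def[symmetric] \<kappa>_def[symmetric] algebra_simps)
qed

lemma Linf_upper: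
  fixes f :: "real \<Rightarrow> real"
  assumes "bounded (range f)"
  shows "\<bar>f y\<bar> \<le> Linf f"
proof -
  obtain B where B: "\<And>x. \<bar>f x\<bar> \<le> B" using assms unfolding bounded_real by auto
  have "bdd_above (range (\<lambda>y. \<bar>f y\<bar>))" using B by (auto simp: bdd_above_def)
  then show ?thesis unfolding Linf_def by (rule cSUP_upper[rotated]) auto
qed



theorem mainTheorem13:
  fixes d1 d2 k \<alpha> \<beta> Am Ap p t :: real
    and U V \<Lambda> :: "real \<Rightarrow> real"
    and u v :: "real \<Rightarrow> real \<Rightarrow> real"
  assumes "d1 > 0" and "d2 > 0" and "k > 0"
    and "\<alpha> \<ge> 1" and "\<beta> = \<alpha>"
    and "Am > 0" and "Ap > 0"
    and "p > 0" and "\<alpha> - 1 \<le> p" and "p \<le> max (\<alpha> / 2) (\<alpha> - 1)"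
    and "sim_profile d1 d2 \<alpha> \<beta> Am Ap U V \<Lambda>"
    and "scaled_solution d1 d2 k \<alpha> \<beta> Am Ap u v"
    and "entropy_regular p d1 d2 \<alpha> \<beta> U V \<Lambda> u v"
    and "(\<lambda>y. \<Lambda> y ^ 2 / U y powr \<alpha>) integrable_on UNIV"
    and "bounded (range (\<lambda>y. \<Lambda> y ^ 2 / U y powr (\<alpha> + 1)))"
    and "t > 0"
  shows
    "(2 \<le> \<alpha> \<and> \<alpha> = p + 1 \<longrightarrow>
        deriv (relent p U V u v) t
          \<le> - (1 / 2 - 0 * exp (- t)) * relent p U V u v t
            + (1 / (4 * k)) * integral UNIV (\<lambda>y. \<Lambda> y ^ 2 / U y powr \<alpha>) * exp (- t)) \<and>
     (1 \<le> \<alpha> \<and> \<alpha> < 2 \<longrightarrow>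
        deriv (relent p U V u v) t
          \<le> - (1 / 2 - (sqrt (1 + p - \<alpha>) / k) * Mhat p \<alpha>
                         * Linf (\<lambda>y. \<Lambda> y ^ 2 / U y powr (\<alpha> + 1)) * exp (- t))
              * relent p U V u v t
            + (1 / k) * Mhat p \<alpha> * (sqrt (1 + p - \<alpha>) * Fstar p (sqrt (1 + p - \<alpha>)) + 1)
              * integral UNIV (\<lambda>y. \<Lambda> y ^ 2 / U y powr \<alpha>) * exp (- t))"
proof -
  note A = assms
  have t0: "t \<ge> 0" using A(16) by simp
  have al: "\<alpha> > 0" using A(4) by simp
  note sp = A(11)[unfolded sim_profile_def]
  note ss = A(12)[unfolded scaled_solution_def]
  note er = A(13)[unfolded entropy_regular_def]
  have Upos: "\<And>y. U y > 0" and Vpos0: "\<And>y. V y > 0" using sp by auto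
  have VU: "\<And>y. V y = U y"
  proof -
    fix y
    have "U y powr \<alpha> = V y powr \<alpha>" using sp A(5) by auto
    then have "(U y powr \<alpha>) powr (1 / \<alpha>) = (V y powr \<alpha>) powr (1 / \<alpha>)" by simp
    then show "V y = U y" using Upos[of y] Vpos0[of y] al by (simp add: powr_powr)
  qed
  have Ud: "\<And>y. U differentiable at y" "\<And>y. deriv U differentiable at y" using sp by auto
  have Vd: "\<And>y. V differentiable at y" "\<And>y. deriv V differentiable at y" using sp by auto
  have Ueq: "\<alpha> * \<Lambda> y = - (d1 * deriv (deriv U) y + y / 2 * deriv U y)" for y
  proof -
    have "d1 * deriv (deriv U) y + y / 2 * deriv U y + \<alpha> * \<Lambda> y = 0" using sp by blast
    then show ?thesis by linarith
  qed
  have Veq: "(- \<alpha>) * \<Lambda> y = - (d2 * deriv (deriv V) y + y / 2 * deriv V y)" for y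
  proof -
    have "d2 * deriv (deriv V) y + y / 2 * deriv V y - \<beta> * \<Lambda> y = 0" using sp by blast
    then show ?thesis using A(5) by simp
  qed
  have upos: "\<And>y. u t y > 0" and vpos: "\<And>y. v t y > 0" using ss t0 by auto
  have ud: "\<And>y. u t differentiable at y" "\<And>y. deriv (u t) differentiable at y" using ss A(16) by auto
  have vd: "\<And>y. v t differentiable at y" "\<And>y. deriv (v t) differentiable at y" using ss A(16) by auto
  have ueq: "\<And>y. dtau u t y = d1 * dyy u t y + y / 2 * dy u t y + exp t * \<alpha> * k * (v t y powr \<beta> - u t y powr \<alpha>)"
    using ss A(16) by auto
  have veq: "\<And>y. dtau v t y = d2 * dyy v t y + y / 2 * dy v t y - exp t * \<beta> * k * (v t y powr \<beta> - u t y powr \<alpha>)"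
    using ss A(16) by auto
  define e where "e = entropy_density p U V u v t"
  define D where "D = (\<lambda>y. dFent p (rdens u U t y) * dtau u t y + dFent p (rdens v V t y) * dtau v t y)"
  define Lf where "Lf = (\<lambda>y. \<Lambda> y ^ 2 / U y powr \<alpha>)"
  have ie: "e integrable_on UNIV" using er t0 by (auto simp: e_def)
  have iD: "D integrable_on UNIV" using er A(16) by (auto simp: D_def)
  have dR: "(relent p U V u v has_real_derivative integral UNIV D) (at t)" using er A(16) by (auto simp: D_def)
  have dR': "deriv (relent p U V u v) t = integral UNIV D" using DERIV_imp_deriv[OF dR] .
  have RE: "relent p U V u v t = integral UNIV e" by (simp add: relent_def e_def)
  have iL: "Lf integrable_on UNIV" using A(14) by (simp add: Lf_def)
  have cru: "component_regular p d1 U \<Lambda> u t" and crv: "component_regular p d2 V \<Lambda> v t" using er A(16) by auto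
  have ru: "rdens u U t = (\<lambda>y. u t y / U y)" and rv: "rdens v V t = (\<lambda>y. v t y / V y)" by (auto simp: rdens_def fun_eq_iff)
  define Hu where "Hu = (\<lambda>y. d1 * dFent p (u t y / U y) * U y * deriv (\<lambda>y. u t y / U y) y
                + Fent p (u t y / U y) * (d1 * deriv U y + y / 2 * U y))"
  define Hv where "Hv = (\<lambda>y. d2 * dFent p (v t y / V y) * V y * deriv (\<lambda>y. v t y / V y) y
                + Fent p (v t y / V y) * (d2 * deriv V y + y / 2 * V y))"
  define Hu' where "Hu' = (\<lambda>y. dFent p (u t y / U y) * (d1 * deriv (deriv (u t)) y + y / 2 * deriv (u t) y)
       + d1 * ddFent p (u t y / U y) * U y * (deriv (\<lambda>y. u t y / U y) y)^2
       + 1/2 * U y * Fent p (u t y / U y)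
       - \<alpha> * \<Lambda> y * (Fent p (u t y / U y) - (u t y / U y) * dFent p (u t y / U y)))"
  define Hv' where "Hv' = (\<lambda>y. dFent p (v t y / V y) * (d2 * deriv (deriv (v t)) y + y / 2 * deriv (v t) y)
       + d2 * ddFent p (v t y / V y) * V y * (deriv (\<lambda>y. v t y / V y) y)^2
       + 1/2 * V y * Fent p (v t y / V y)
       - (- \<alpha>) * \<Lambda> y * (Fent p (v t y / V y) - (v t y / V y) * dFent p (v t y / V y)))"
  have dHu: "\<And>y. (Hu has_real_derivative Hu' y) (at y)"
    unfolding Hu_def Hu'_def by (rule component_H[OF upos Upos ud Ud Ueq A(8)])
  have dHv: "\<And>y. (Hv has_real_derivative Hv' y) (at y)"
    unfolding Hv_def Hv'_def by (rule component_H[OF vpos Vpos0 vd Vd Veq A(8)])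
  have dH: "\<And>y. ((\<lambda>y. Hu y + Hv y) has_real_derivative (Hu' y + Hv' y)) (at y)"
    using dHu dHv by (rule DERIV_add)
  have lims: "((\<lambda>y. Hu y + Hv y) \<longlongrightarrow> 0) at_top \<and> ((\<lambda>y. Hu y + Hv y) \<longlongrightarrow> 0) at_bot"
  proof -
    note cu = cru[unfolded component_regular_def dy_def ru]
    note cv = crv[unfolded component_regular_def dy_def rv]
    have "((\<lambda>y. d1 * (dFent p (u t y / U y) * U y * deriv (\<lambda>y. u t y / U y) y)
            + Fent p (u t y / U y) * (d1 * deriv U y + y / 2 * U y)
          + (d2 * (dFent p (v t y / V y) * V y * deriv (\<lambda>y. v t y / V y) y)
            + Fent p (v t y / V y) * (d2 * deriv V y + y / 2 * V y))) \<longlongrightarrow> d1 * 0 + 0 + (d2 * 0 + 0)) at_top"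
      using cu cv by (intro tendsto_intros) auto
    moreover have "((\<lambda>y. d1 * (dFent p (u t y / U y) * U y * deriv (\<lambda>y. u t y / U y) y)
            + Fent p (u t y / U y) * (d1 * deriv U y + y / 2 * U y)
          + (d2 * (dFent p (v t y / V y) * V y * deriv (\<lambda>y. v t y / V y) y)
            + Fent p (v t y / V y) * (d2 * deriv V y + y / 2 * V y))) \<longlongrightarrow> d1 * 0 + 0 + (d2 * 0 + 0)) at_bot"
      using cu cv by (intro tendsto_intros) auto
    ultimately show ?thesis by (simp add: Hu_def Hv_def mult.assoc)
  qed
  define S where "S = (\<lambda>y. \<alpha> / p * \<Lambda> y * ((v t y / U y) powr p - (u t y / U y) powr p)
          + exp t * \<alpha> * k * ((U y * (v t y / U y)) powr \<alpha> - (U y * (u t y / U y)) powr \<alpha>)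
              * (dFent p (u t y / U y) - dFent p (v t y / U y)))"
  have pw0: "D y \<le> Hu' y + Hv' y - 1/2 * e y + S y" for y
  proof -
    define a where "a = u t y / U y"
    define b where "b = v t y / U y"
    have a: "a > 0" and b: "b > 0" using upos[of y] vpos[of y] Upos[of y] by (auto simp: a_def b_def)
    have ua: "u t y = U y * a" and vb: "v t y = U y * b" using Upos[of y] by (auto simp: a_def b_def)
    have f1: "d1 * ddFent p a * U y * (deriv (\<lambda>y. u t y / U y) y)^2 \<ge> 0"
      using A(1) Upos[of y] by (simp add: ddFent_def)
    have f2: "d2 * ddFent p b * U y * (deriv (\<lambda>y. v t y / V y) y)^2 \<ge> 0"
      using A(2) Upos[of y] by (simp add: ddFent_def)
    have Fa: "Fent p a - a * dFent p a = (1 - a powr p) / p" by (rule F_minus[OF a A(8)])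
    have Fb: "Fent p b - b * dFent p b = (1 - b powr p) / p" by (rule F_minus[OF b A(8)])
    have eq1: "D y = Hu' y + Hv' y - d1 * ddFent p a * U y * (deriv (\<lambda>y. u t y / U y) y)^2
           - d2 * ddFent p b * U y * (deriv (\<lambda>y. v t y / V y) y)^2 - 1/2 * e y + S y"
    proof -
      have "D y = dFent p a * (d1 * deriv (deriv (u t)) y + y / 2 * deriv (u t) y)
          + dFent p b * (d2 * deriv (deriv (v t)) y + y / 2 * deriv (v t) y)
          + exp t * \<alpha> * k * ((U y * b) powr \<alpha> - (U y * a) powr \<alpha>) * (dFent p a - dFent p b)"
        unfolding D_def ueq veq rdens_def A(5) dyy_def dy_def a_def[symmetric] VU
        unfolding b_def[symmetric] ua vb using Upos[of y] by (simp add: algebra_simps)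
      moreover have "e y = U y * Fent p a + U y * Fent p b"
        by (simp add: e_def entropy_density_def rdens_def a_def b_def VU)
      moreover have "S y = \<alpha> / p * \<Lambda> y * (b powr p - a powr p)
          + exp t * \<alpha> * k * ((U y * b) powr \<alpha> - (U y * a) powr \<alpha>) * (dFent p a - dFent p b)"
        by (simp add: S_def a_def b_def)
      moreover have "Hu' y = dFent p a * (d1 * deriv (deriv (u t)) y + y / 2 * deriv (u t) y)
       + d1 * ddFent p a * U y * (deriv (\<lambda>y. u t y / U y) y)^2
       + 1/2 * U y * Fent p a - \<alpha> * \<Lambda> y * ((1 - a powr p) / p)"
        unfolding Hu'_def a_def[symmetric] Fa by simp
      moreover have "Hv' y = dFent p b * (d2 * deriv (deriv (v t)) y + y / 2 * deriv (v t) y)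
       + d2 * ddFent p b * U y * (deriv (\<lambda>y. v t y / V y) y)^2
       + 1/2 * U y * Fent p b - (- \<alpha>) * \<Lambda> y * ((1 - b powr p) / p)"
        unfolding Hv'_def VU b_def[symmetric] Fb using Upos[of y] by simp
      ultimately show ?thesis by (simp add: algebra_simps diff_divide_distrib)
    qed
    show ?thesis using eq1 f1 f2 by linarith
  qed
  have gen: "deriv (relent p U V u v) t \<le> - K1 * relent p U V u v t + K2 * integral UNIV Lf"
    if hS: "\<And>y. S y \<le> K2 * Lf y + (1/2 - K1) * e y" for K1 K2
  proof -
    have "integral UNIV D \<le> - K1 * integral UNIV e + K2 * integral UNIV Lf"
    proof (rule limit_ineq[OF iD ie iL dH])
      fix y show "D y \<le> Hu' y + Hv' y - K1 * e y + K2 * Lf y"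
        using pw0[of y] hS[of y] by (simp add: algebra_simps)
    qed (use lims in auto)
    then show ?thesis using dR' RE by simp
  qed
  show ?thesis
  proof (intro conjI impI)
    assume cA: "2 \<le> \<alpha> \<and> \<alpha> = p + 1"
    have "deriv (relent p U V u v) t \<le> - (1/2) * relent p U V u v t + (exp (- t) / (4 * k)) * integral UNIV Lf"
    proof (rule gen)
      fix y
      have a: "u t y / U y > 0" and b: "v t y / U y > 0" using upos[of y] vpos[of y] Upos[of y] by auto
      have "S y \<le> exp (- t) * \<Lambda> y ^ 2 / (4 * k * U y powr \<alpha>)"
        unfolding S_def by (rule caseA_pw[OF _ A(8) A(3) Upos a b]) (use cA in simp)
      also have "\<dots> = exp (- t) / (4 * k) * Lf y" by (simp add: Lf_def)
      finally show "S y \<le> exp (- t) / (4 * k) * Lf y + (1/2 - 1/2) * e y" by simp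
    qed
    then show "deriv (relent p U V u v) t
          \<le> - (1 / 2 - 0 * exp (- t)) * relent p U V u v t
            + (1 / (4 * k)) * integral UNIV (\<lambda>y. \<Lambda> y ^ 2 / U y powr \<alpha>) * exp (- t)"
      by (simp add: Lf_def mult.commute)
  next
    assume cB: "1 \<le> \<alpha> \<and> \<alpha> < 2"
    have pa2: "p \<le> \<alpha> / 2" using A(10) cB by (simp add: max_def split: if_splits)
    have p1: "p < 1" using pa2 cB by simp
    have p2: "2 * p \<le> \<alpha>" using pa2 by simp
    define \<kappa> where "\<kappa> = sqrt (1 + p - \<alpha>)"
    define M where "M = Mhat p \<alpha>"
    define Li where "Li = Linf (\<lambda>y. \<Lambda> y ^ 2 / U y powr (\<alpha> + 1))"
    have M0: "M \<ge> 0" unfolding M_def using Mhat_facts(2)[OF A(8) p1 p2] .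
    have k0: "\<kappa> \<ge> 0" unfolding \<kappa>_def using A(9) by simp
    have "deriv (relent p U V u v) t \<le> - (1/2 - \<kappa> / k * M * Li * exp (- t)) * relent p U V u v t
             + (1 / k * M * (\<kappa> * Fstar p \<kappa> + 1) * exp (- t)) * integral UNIV Lf"
    proof (rule gen)
      fix y
      define a where "a = u t y / U y"
      define b where "b = v t y / U y"
      have a: "a > 0" and b: "b > 0" using upos[of y] vpos[of y] Upos[of y] by (auto simp: a_def b_def)
      have Uy: "U y > 0" by (rule Upos)
      have s1: "S y \<le> exp (- t) * M * \<Lambda> y ^ 2 * a powr (1 + p - \<alpha>) / (k * U y powr \<alpha>)"
        unfolding S_def M_def a_def b_def
        by (rule caseB_pw[OF A(8) p1 p2 A(3) Uy]) (use a b in \<open>auto simp: a_def b_def\<close>)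
      define c where "c = exp (- t) * M * \<Lambda> y ^ 2 / (k * U y powr \<alpha>)"
      have c0: "c \<ge> 0" unfolding c_def using M0 A(3) by simp
      have aq: "a powr (1 + p - \<alpha>) \<le> \<kappa> * Fent p a + \<kappa> * Fstar p \<kappa> + 1"
        unfolding \<kappa>_def by (rule aq_bound[OF A(8) p1 A(9) _ a]) (use p2 al in simp)
      have "S y \<le> c * a powr (1 + p - \<alpha>)" using s1 by (simp add: c_def)
      also have "\<dots> \<le> c * (\<kappa> * Fent p a + \<kappa> * Fstar p \<kappa> + 1)" using aq c0 by (rule mult_left_mono)
      also have "\<dots> = exp (- t) * M * \<kappa> / k * (\<Lambda> y ^ 2 / U y powr (\<alpha> + 1)) * (U y * Fent p a)
            + (1 / k * M * (\<kappa> * Fstar p \<kappa> + 1) * exp (- t)) * Lf y"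
        using Uy A(3) by (simp add: c_def Lf_def powr_add field_simps)
      also have "\<dots> \<le> exp (- t) * M * \<kappa> / k * Li * e y + (1 / k * M * (\<kappa> * Fstar p \<kappa> + 1) * exp (- t)) * Lf y"
      proof -
        have F0: "Fent p a \<ge> 0" "Fent p b \<ge> 0" using Fent_nonneg[OF a A(8)] Fent_nonneg[OF b A(8)] by auto
        have eU: "U y * Fent p a \<le> e y"
          using F0 Uy by (simp add: e_def entropy_density_def rdens_def a_def b_def VU)
        have L1: "\<Lambda> y ^ 2 / U y powr (\<alpha> + 1) \<le> Li"
          using Linf_upper[OF A(15), of y] unfolding Li_def by simp
        have L0: "\<Lambda> y ^ 2 / U y powr (\<alpha> + 1) \<ge> 0" by simp
        have g0: "exp (- t) * M * \<kappa> / k \<ge> 0" using M0 k0 A(3) by simp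
        have "(\<Lambda> y ^ 2 / U y powr (\<alpha> + 1)) * (U y * Fent p a) \<le> Li * e y"
          using L1 L0 eU F0 Uy order_trans[OF L0 L1] by (intro mult_mono) auto
        then have "exp (- t) * M * \<kappa> / k * ((\<Lambda> y ^ 2 / U y powr (\<alpha> + 1)) * (U y * Fent p a))
                   \<le> exp (- t) * M * \<kappa> / k * (Li * e y)" using g0 by (rule mult_left_mono)
        then show ?thesis by (simp add: mult.assoc)
      qed
      finally show "S y \<le> (1 / k * M * (\<kappa> * Fstar p \<kappa> + 1) * exp (- t)) * Lf y
                         + (1/2 - (1/2 - \<kappa> / k * M * Li * exp (- t))) * e y"
        by (simp add: algebra_simps)
    qed
    then show "deriv (relent p U V u v) t
          \<le> - (1 / 2 - (sqrt (1 + p - \<alpha>) / k) * Mhat p \<alpha>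
                         * Linf (\<lambda>y. \<Lambda> y ^ 2 / U y powr (\<alpha> + 1)) * exp (- t))
              * relent p U V u v t
            + (1 / k) * Mhat p \<alpha> * (sqrt (1 + p - \<alpha>) * Fstar p (sqrt (1 + p - \<alpha>)) + 1)
              * integral UNIV (\<lambda>y. \<Lambda> y ^ 2 / U y powr \<alpha>) * exp (- t)"
      by (simp add: Lf_def \<kappa>_def M_def Li_def algebra_simps)
  qed
qed


end
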